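(* Let $d = 10$. (i) If $n = 4(12m+5) + 4(6k+3)\sqrt{10}$ with $m, k \in \mathbb{Z}$ and $m \equiv 2$ or $3 \pmod 5$, then there exist infinitely many $D(n)$-quadruples in $\mathbb{Z}[\sqrt{10}]$. (ii) If $n = 4(12m+11) + 4(6k+3)\sqrt{10}$ with $m, k \in \mathbb{Z}$ and $m \equiv 0$ or $4 \pmod 5$, then there exist infinitely many $D(n)$-quadruples in $\mathbb{Z}[\sqrt{10}]$.
   Context: For $n \in \mathbb{Z}[\sqrt{d}]$, a set $\{a_1,a_2,a_3,a_4\}$ of four distinct non-zero elements of $\mathbb{Z}[\sqrt{d}]$ is called a $D(n)$-quadruple in $\mathbb{Z}[\sqrt{d}]$ if $a_ia_j + n$ is a square of an element of $\mathbb{Z}[\sqrt{d}]$ for all $1 \le i < j \le 4$. *)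

theory Defs
  imports Main
begin

text \<open>Elements of Z[sqrt d] are represented as pairs (a, b) :: int \<times> int,
standing for a + b * sqrt d.\<close>

definition zsd_mult :: "int \<Rightarrow> int \<times> int \<Rightarrow> int \<times> int \<Rightarrow> int \<times> int" where
  "zsd_mult d x y = (fst x * fst y + d * snd x * snd y, fst x * snd y + snd x * fst y)"

definition zsd_add :: "int \<times> int \<Rightarrow> int \<times> int \<Rightarrow> int \<times> int" where
  "zsd_add x y = (fst x + fst y, snd x + snd y)"

definition zsd_is_square :: "int \<Rightarrow> int \<times> int \<Rightarrow> bool" where
  "zsd_is_square d x \<longleftrightarrow> (\<exists>r. zsd_mult d r r = x)"

definition is_Dn_quadruple :: "int \<Rightarrow> int \<times> int \<Rightarrow> (int \<times> int) set \<Rightarrow> bool" where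
  "is_Dn_quadruple d n Q \<longleftrightarrow> card Q = 4 \<and> (0, 0) \<notin> Q \<and>
     (\<forall>a\<in>Q. \<forall>b\<in>Q. a \<noteq> b \<longrightarrow> zsd_is_square d (zsd_add (zsd_mult d a b) n))"

end

theory Submission
  imports Defs
begin


definition mul :: "int \<times> int \<Rightarrow> int \<times> int \<Rightarrow> int \<times> int" where "mul = zsd_mult 10"
definition L :: "int \<Rightarrow> int \<Rightarrow> int \<times> int \<Rightarrow> int \<times> int" where "L a b k = (a * fst k + b, a * snd k)"
definition cst :: "int \<Rightarrow> int \<times> int" where "cst i = (i, 0)"

definition famB where "famB m k = zsd_add (mul m (mul (L 3 1 k) (L 3 1 k))) (L 4 0 k)"
definition famC where "famC m k = zsd_add (mul m (mul (L 3 2 k) (L 3 2 k))) (L 4 4 k)"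
definition famD where "famD m k = zsd_add (mul (cst 9) (mul m (mul (L 2 1 k) (L 2 1 k)))) (L 16 8 k)"
definition famN where "famN m k = zsd_add (cst 4) (mul (cst 4) (mul m (L 2 1 k)))"
lemmas U = mul_def zsd_mult_def zsd_add_def L_def cst_def famB_def famC_def famD_def famN_def

lemma mul_comm: "zsd_mult 10 x y = zsd_mult 10 y x"
  unfolding zsd_mult_def by (simp add: algebra_simps)

lemma sqAB: "zsd_is_square 10 (zsd_add (zsd_mult 10 m (famB m k)) (famN m k))"
proof -
  have "mul (zsd_add (mul m (L 3 1 k)) (cst 2)) (zsd_add (mul m (L 3 1 k)) (cst 2)) = zsd_add (mul m (famB m k)) (famN m k)"
    unfolding U by (simp, intro conjI; algebra)
  then show ?thesis unfolding zsd_is_square_def mul_def by blast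
qed

lemma sqAC: "zsd_is_square 10 (zsd_add (zsd_mult 10 m (famC m k)) (famN m k))"
proof -
  have "mul (zsd_add (mul m (L 3 2 k)) (cst 2)) (zsd_add (mul m (L 3 2 k)) (cst 2)) = zsd_add (mul m (famC m k)) (famN m k)"
    unfolding U by (simp, intro conjI; algebra)
  then show ?thesis unfolding zsd_is_square_def mul_def by blast
qed

lemma sqAD: "zsd_is_square 10 (zsd_add (zsd_mult 10 m (famD m k)) (famN m k))"
proof -
  have "mul (zsd_add (mul (cst 3) (mul m (L 2 1 k))) (cst 2)) (zsd_add (mul (cst 3) (mul m (L 2 1 k))) (cst 2)) = zsd_add (mul m (famD m k)) (famN m k)"
    unfolding U by (simp, intro conjI; algebra)
  then show ?thesis unfolding zsd_is_square_def mul_def by blast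
qed

lemma sqBC: "zsd_is_square 10 (zsd_add (zsd_mult 10 (famB m k) (famC m k)) (famN m k))"
proof -
  have "mul (zsd_add (mul m (mul (L 3 1 k) (L 3 2 k))) (L 4 2 k)) (zsd_add (mul m (mul (L 3 1 k) (L 3 2 k))) (L 4 2 k)) = zsd_add (mul (famB m k) (famC m k)) (famN m k)"
    unfolding U by (simp, intro conjI; algebra)
  then show ?thesis unfolding zsd_is_square_def mul_def by blast
qed

lemma sqBD: "zsd_is_square 10 (zsd_add (zsd_mult 10 (famB m k) (famD m k)) (famN m k))"
proof -
  have "mul (zsd_add (mul (cst 3) (mul m (mul (L 3 1 k) (L 2 1 k)))) (L 8 2 k)) (zsd_add (mul (cst 3) (mul m (mul (L 3 1 k) (L 2 1 k)))) (L 8 2 k)) = zsd_add (mul (famB m k) (famD m k)) (famN m k)"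
    unfolding U by (simp, intro conjI; algebra)
  then show ?thesis unfolding zsd_is_square_def mul_def by blast
qed

lemma sqCD: "zsd_is_square 10 (zsd_add (zsd_mult 10 (famC m k) (famD m k)) (famN m k))"
proof -
  have "mul (zsd_add (mul (cst 3) (mul m (mul (L 3 2 k) (L 2 1 k)))) (L 8 6 k)) (zsd_add (mul (cst 3) (mul m (mul (L 3 2 k) (L 2 1 k)))) (L 8 6 k)) = zsd_add (mul (famC m k) (famD m k)) (famN m k)"
    unfolding U by (simp, intro conjI; algebra)
  then show ?thesis unfolding zsd_is_square_def mul_def by blast
qed

lemma sqs2:
 "zsd_is_square 10 (zsd_add (zsd_mult 10 (famB m k) m) (famN m k))"
 "zsd_is_square 10 (zsd_add (zsd_mult 10 (famC m k) m) (famN m k))"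
 "zsd_is_square 10 (zsd_add (zsd_mult 10 (famD m k) m) (famN m k))"
 "zsd_is_square 10 (zsd_add (zsd_mult 10 (famC m k) (famB m k)) (famN m k))"
 "zsd_is_square 10 (zsd_add (zsd_mult 10 (famD m k) (famB m k)) (famN m k))"
 "zsd_is_square 10 (zsd_add (zsd_mult 10 (famD m k) (famC m k)) (famN m k))"
  by (metis sqAB sqAC sqAD sqBC sqBD sqCD mul_comm)+

lemmas sqs = sqAB sqAC sqAD sqBC sqBD sqCD sqs2

lemma quad:
  assumes "m \<noteq> (0,0)" "famB m k \<noteq> (0,0)" "famC m k \<noteq> (0,0)" "famD m k \<noteq> (0,0)"
    "m \<noteq> famB m k" "m \<noteq> famC m k" "m \<noteq> famD m k" "famB m k \<noteq> famC m k"
    "famB m k \<noteq> famD m k" "famC m k \<noteq> famD m k"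
  shows "is_Dn_quadruple 10 (famN m k) {m, famB m k, famC m k, famD m k}"
  unfolding is_Dn_quadruple_def using assms by (auto simp: sqs)



definition eq3 :: "int \<times> int \<Rightarrow> int \<times> int \<Rightarrow> bool" where
  "eq3 x y \<longleftrightarrow> fst x mod 3 = fst y mod 3 \<and> snd x mod 3 = snd y mod 3"

lemma eq3_refl: "eq3 x x" by (simp add: eq3_def)

lemma eq3_mul: "eq3 x x' \<Longrightarrow> eq3 y y' \<Longrightarrow> eq3 (mul x y) (mul x' y')"
  unfolding eq3_def mul_def zsd_mult_def
  by (elim conjE; simp only: fst_conv snd_conv; intro conjI mod_add_cong mod_mult_cong refl; assumption)

lemma eq3_add: "eq3 x x' \<Longrightarrow> eq3 y y' \<Longrightarrow> eq3 (zsd_add x y) (zsd_add x' y')"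
  unfolding eq3_def zsd_add_def
  by (elim conjE; simp only: fst_conv snd_conv; intro conjI mod_add_cong mod_mult_cong refl; assumption)

lemma eq3_L: "eq3 x x' \<Longrightarrow> eq3 (L a b x) (L a b x')"
  unfolding eq3_def L_def
  by (elim conjE; simp only: fst_conv snd_conv; intro conjI mod_add_cong mod_mult_cong refl; assumption)

lemmas eq3I = eq3_refl eq3_mul eq3_add eq3_L

lemma eq3_ne: "eq3 x (c1, 0) \<Longrightarrow> eq3 y (c2, 0) \<Longrightarrow> c1 mod 3 \<noteq> c2 mod 3 \<Longrightarrow> x \<noteq> y"
  unfolding eq3_def by auto

lemma eq3_nz: "eq3 x (c, 0) \<Longrightarrow> c mod 3 \<noteq> 0 \<Longrightarrow> x \<noteq> (0,0)"
  unfolding eq3_def by auto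

lemma descent: "(a::int)^2 = 10 * b^2 \<Longrightarrow> b = 0"
proof (induction "nat \<bar>b\<bar>" arbitrary: a b rule: less_induct)
  case (less b a)
  show ?case
  proof (rule ccontr)
    assume b0: "b \<noteq> 0"
    have "a^2 = 2 * (5 * b^2)" using less.prems by simp
    then have "even (a^2)" by simp
    then have "even a" by simp
    then obtain c where c: "a = 2 * c" by (auto elim: evenE)
    have "4 * c^2 = 10 * b^2" using less.prems c by (simp add: power_mult_distrib)
    then have h: "5 * b^2 = 2 * c^2" by linarith
    have "even (5 * b^2)" unfolding h by simp
    then have "even b" by simp
    then obtain e where e: "b = 2 * e" by (auto elim: evenE)
    have "5 * (4 * e^2) = 2 * c^2" using h e by (simp add: power_mult_distrib)
    then have "c^2 = 10 * e^2" by linarith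
    moreover have "nat \<bar>e\<bar> < nat \<bar>b\<bar>" using e b0 by linarith
    ultimately have "e = 0" using less.hyps by blast
    then show False using e b0 by simp
  qed
qed

definition nrm :: "int \<times> int \<Rightarrow> int" where "nrm x = (fst x)^2 - 10 * (snd x)^2"

lemma nrm_mul: "nrm (mul x y) = nrm x * nrm y"
  unfolding nrm_def mul_def zsd_mult_def by (simp; algebra)

lemma nrm_zero: "nrm x = 0 \<Longrightarrow> x = (0,0)"
proof -
  assume "nrm x = 0"
  then have h: "(fst x)^2 = 10 * (snd x)^2" unfolding nrm_def by simp
  then have "snd x = 0" by (rule descent)
  with h have "fst x = 0" by simp
  with \<open>snd x = 0\<close> show ?thesis by (simp add: prod_eq_iff)
qed

lemma domain: "mul x y = (0,0) \<Longrightarrow> x = (0,0) \<or> y = (0,0)"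
proof -
  assume "mul x y = (0,0)"
  then have "nrm (mul x y) = 0" by (simp add: nrm_def)
  then have "nrm x * nrm y = 0" by (simp only: nrm_mul)
  then have "nrm x = 0 \<or> nrm y = 0" by simp
  then show ?thesis using nrm_zero by blast
qed

fun sr :: "nat \<Rightarrow> int \<times> int" where
  "sr 0 = (9, 3)"
| "sr (Suc j) = (19 * fst (sr j) + 60 * snd (sr j) + 9, 6 * fst (sr j) + 19 * snd (sr j) + 3)"

lemma sr_inv: "(2 * fst (sr j) + 1)^2 - 40 * (snd (sr j))^2 = 1 \<and> fst (sr j) mod 3 = 0 \<and> snd (sr j) mod 3 = 0
   \<and> fst (sr j) \<ge> 9 \<and> snd (sr j) \<ge> 3"
proof (induction j)
  case 0 then show ?case by simp
next
  case (Suc j)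
  obtain s r where sr: "sr j = (s, r)" by (cases "sr j")
  have P: "(2 * s + 1)^2 - 40 * r^2 = 1" using Suc sr by simp
  have "(2 * (19 * s + 60 * r + 9) + 1)^2 - 40 * (6 * s + 19 * r + 3)^2 = (2 * s + 1)^2 - 40 * r^2"
    by (simp add: power2_eq_square algebra_simps)
  moreover have "s mod 3 = 0" "r mod 3 = 0" "s \<ge> 9" "r \<ge> 3" using Suc sr by auto
  moreover have "(19 * s + 60 * r + 9) mod 3 = 0" "(6 * s + 19 * r + 3) mod 3 = 0"
    using \<open>s mod 3 = 0\<close> \<open>r mod 3 = 0\<close> by presburger+
  ultimately show ?case using sr P by simp
qed

lemma sr_mono: "strict_mono (\<lambda>j. fst (sr j))"
proof (unfold strict_mono_Suc_iff, intro allI)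
  fix j
  have "fst (sr j) \<ge> 9" "snd (sr j) \<ge> 3" using sr_inv[of j] by auto
  then show "fst (sr j) < fst (sr (Suc j))" by simp
qed



lemma idB: "famB m k = zsd_add m (mul k (zsd_add (mul (cst 3) (mul m (L 3 2 k))) (cst 4)))"
  unfolding U by (simp, intro conjI; algebra)

lemma idD: "famD m k = zsd_add (famC m k) (mul (L 3 1 k) (zsd_add (mul m (L 9 5 k)) (cst 4)))"
  unfolding U by (simp, intro conjI; algebra)

lemma Gcontra:
  assumes P: "(2*s+1)^2 - 40*r^2 = (1::int)"
    and G: "zsd_add (mul (mul (x,y) (2*s+1, -2*r)) (L 9 5 (s,r))) (cst 4) = (0,0)"
  shows "16*(5*x^2+9*x+4 - 50*y^2) = 0"
proof -
  from G have e1: "((x * (2 * s + 1) + 10 * y * (- 2 * r)) * (9 * s + 5) + 10 * (x * (- 2 * r) + y * (2 * s + 1)) * (9 * r) + 4) = 0"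
    and e2: "((x * (2 * s + 1) + 10 * y * (- 2 * r)) * (9 * r) + (x * (- 2 * r) + y * (2 * s + 1)) * (9 * s + 5)) = 0"
    unfolding U by (simp_all add: prod_eq_iff)
  show ?thesis using P e1 e2 by algebra
qed

lemma mw: assumes P: "(2*s+1)^2 - 40*r^2 = (1::int)"
  shows "mul (mul (x,y) (2*s+1, -2*r)) (L 2 1 (s,r)) = (x, y)"
  using P unfolding U by (simp, intro conjI; algebra)

lemma Dlemma: assumes P: "(2*s+1)^2 - 40*r^2 = (1::int)"
  shows "famD (mul (x,y) (2*s+1, -2*r)) (s,r) = mul (2*s+1, 2*r) (9*x+8, 9*y)"
  using P unfolding U by (simp, intro conjI; algebra)

lemma cancel: assumes "mul u z = mul v z" "z \<noteq> (0,0)" shows "u = v"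
proof -
  from assms(1) have e1: "fst u * fst z + 10 * snd u * snd z = fst v * fst z + 10 * snd v * snd z"
    and e2: "fst u * snd z + snd u * fst z = fst v * snd z + snd v * fst z"
    unfolding mul_def zsd_mult_def by (simp_all add: prod_eq_iff)
  have "mul (fst u - fst v, snd u - snd v) z = (0,0)"
    unfolding mul_def zsd_mult_def using e1 e2 by (simp add: prod_eq_iff; intro conjI; algebra)
  then have "(fst u - fst v, snd u - snd v) = (0,0)" using domain assms(2) by blast
  then show ?thesis by (simp add: prod_eq_iff)
qed

lemma valid_one:
  fixes a b s r :: int
  assumes P: "(2*s+1)^2 - 40*r^2 = 1" and s3: "s mod 3 = 0" and r3: "r mod 3 = 0" and s9: "s \<ge> 9"
   and a3: "a mod 3 = 2" and b3: "b mod 3 = 0" and a5: "a mod 5 = 1 \<or> a mod 5 = 4"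
  shows "is_Dn_quadruple 10 (4*a, 4*b) {mul (a-1, b) (2*s+1, -2*r), famB (mul (a-1, b) (2*s+1, -2*r)) (s,r),
     famC (mul (a-1, b) (2*s+1, -2*r)) (s,r), famD (mul (a-1, b) (2*s+1, -2*r)) (s,r)}"
proof -
  define m where "m = mul (a-1, b) (2*s+1, -2*r)"
  define k where "k = (s, r)"
  have N: "famN m k = (4*a, 4*b)"
    unfolding famN_def m_def k_def mw[OF P] by (simp add: zsd_add_def mul_def zsd_mult_def cst_def)
  have "eq3 m (mul (1,0) (1,0))" unfolding m_def
    by (rule eq3_mul) (use a3 b3 s3 r3 in \<open>simp add: eq3_def; presburger\<close>)+
  then have em: "eq3 m (1,0)" by (simp add: mul_def zsd_mult_def)
  have ek: "eq3 k (0,0)" using s3 r3 by (simp add: k_def eq3_def)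
  have eB: "eq3 (famB m k) (famB (1,0) (0,0))" unfolding famB_def by (intro eq3I em ek)
  have eC: "eq3 (famC m k) (famC (1,0) (0,0))" unfolding famC_def by (intro eq3I em ek)
  have eD: "eq3 (famD m k) (famD (1,0) (0,0))" unfolding famD_def by (intro eq3I em ek)
  have vB: "famB (1,0) (0,0) = (1,0)" "famC (1,0) (0,0) = (8,0)" "famD (1,0) (0,0) = (17,0)"
    unfolding U by simp_all
  note eB' = eB[unfolded vB] and eC' = eC[unfolded vB] and eD' = eD[unfolded vB]
  have AB: "m \<noteq> famB m k"
  proof
    assume h: "m = famB m k"
    define F where "F = zsd_add (mul (cst 3) (mul m (L 3 2 k))) (cst 4)"
    have "mul k F = (0,0)" using h idB[of m k] unfolding F_def[symmetric]
      by (simp add: zsd_add_def prod_eq_iff)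
    then have "k = (0,0) \<or> F = (0,0)" by (rule domain)
    moreover have "k \<noteq> (0,0)" using s9 by (simp add: k_def)
    moreover have "eq3 F (zsd_add (mul (cst 3) (mul (1,0) (L 3 2 (0,0)))) (cst 4))"
      unfolding F_def by (intro eq3I em ek)
    then have "F \<noteq> (0,0)" by (intro eq3_nz[of F 10]) (simp_all add: U)
    ultimately show False by blast
  qed
  have CD: "famC m k \<noteq> famD m k"
  proof
    assume h: "famC m k = famD m k"
    define G where "G = zsd_add (mul m (L 9 5 k)) (cst 4)"
    have "mul (L 3 1 k) G = (0,0)" using h idD[of m k] unfolding G_def[symmetric]
      by (simp add: zsd_add_def prod_eq_iff)
    then have "L 3 1 k = (0,0) \<or> G = (0,0)" by (rule domain)
    moreover have "eq3 (L 3 1 k) (L 3 1 (0,0))" by (intro eq3I ek)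
    then have "L 3 1 k \<noteq> (0,0)" by (intro eq3_nz[of _ 1]) (simp_all add: L_def)
    moreover have "G \<noteq> (0,0)"
    proof
      assume "G = (0,0)"
      then have "16*(5*(a-1)^2+9*(a-1)+4 - 50*b^2) = 0"
        using Gcontra[OF P, of "a-1" b] unfolding G_def m_def k_def by blast
      then have "a = 5 * (a^2 - 10*b^2)" by (simp add: power2_eq_square algebra_simps)
      then have "5 dvd a" unfolding dvd_def by blast
      then have "a mod 5 = 0" by simp
      then show False using a5 by simp
    qed
    ultimately show False by blast
  qed
  have "is_Dn_quadruple 10 (famN m k) {m, famB m k, famC m k, famD m k}"
  proof (rule quad)
    show "m \<noteq> (0,0)" by (rule eq3_nz[OF em]) simp
    show "famB m k \<noteq> (0,0)" by (rule eq3_nz[OF eB']) simp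
    show "famC m k \<noteq> (0,0)" by (rule eq3_nz[OF eC']) simp
    show "famD m k \<noteq> (0,0)" by (rule eq3_nz[OF eD']) simp
    show "m \<noteq> famB m k" by (rule AB)
    show "m \<noteq> famC m k" by (rule eq3_ne[OF em eC']) simp
    show "m \<noteq> famD m k" by (rule eq3_ne[OF em eD']) simp
    show "famB m k \<noteq> famC m k" by (rule eq3_ne[OF eB' eC']) simp
    show "famB m k \<noteq> famD m k" by (rule eq3_ne[OF eB' eD']) simp
    show "famC m k \<noteq> famD m k" by (rule CD)
  qed
  then have "is_Dn_quadruple 10 (4*a, 4*b) {m, famB m k, famC m k, famD m k}" by (simp only: N)
  then show ?thesis by (simp only: m_def k_def)
qed

lemma key:
  fixes a b :: int
  assumes a3: "a mod 3 = 2" and b3: "b mod 3 = 0" and a5: "a mod 5 = 1 \<or> a mod 5 = 4"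
  shows "infinite {Q. is_Dn_quadruple 10 (4*a, 4*b) Q}"
proof -
  define mm where "mm j = mul (a-1, b) (2*fst (sr j)+1, -2*snd (sr j))" for j
  define Q where "Q j = {mm j, famB (mm j) (sr j), famC (mm j) (sr j), famD (mm j) (sr j)}" for j
  define D where "D j = famD (mm j) (sr j)" for j
  have valid: "is_Dn_quadruple 10 (4*a,4*b) (Q j)" for j
  proof -
    have "is_Dn_quadruple 10 (4*a,4*b) {mul (a-1, b) (2*fst (sr j)+1, -2*snd (sr j)),
       famB (mul (a-1, b) (2*fst (sr j)+1, -2*snd (sr j))) (fst (sr j), snd (sr j)),
       famC (mul (a-1, b) (2*fst (sr j)+1, -2*snd (sr j))) (fst (sr j), snd (sr j)),
       famD (mul (a-1, b) (2*fst (sr j)+1, -2*snd (sr j))) (fst (sr j), snd (sr j))}"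
      using sr_inv[of j] a3 b3 a5 by (intro valid_one) auto
    then show ?thesis unfolding Q_def mm_def by simp
  qed
  have Dform: "D j = mul (2*fst (sr j)+1, 2*snd (sr j)) (9*(a-1)+8, 9*b)" for j
  proof -
    have "famD (mul (a-1, b) (2*fst (sr j)+1, -2*snd (sr j))) (fst (sr j), snd (sr j))
       = mul (2*fst (sr j)+1, 2*snd (sr j)) (9*(a-1)+8, 9*b)"
      using sr_inv[of j] by (intro Dlemma) auto
    then show ?thesis unfolding D_def mm_def by simp
  qed
  have "9*(a-1)+8 \<noteq> 0" by presburger
  then have znz: "(9*(a-1)+8, 9*b) \<noteq> (0,0)" by simp
  have "inj D"
  proof (rule injI)
    fix i j assume "D i = D j"
    then have "(2*fst (sr i)+1, 2*snd (sr i)) = (2*fst (sr j)+1, 2*snd (sr j))"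
      unfolding Dform using znz by (rule cancel)
    then have "fst (sr i) = fst (sr j)" by simp
    then show "i = j" using strict_mono_eq[OF sr_mono, of i j] by simp
  qed
  then have infD: "infinite (range D)" using finite_imageD infinite_UNIV_nat by blast
  have "range D \<subseteq> \<Union>(range Q)" unfolding D_def Q_def by auto
  then have "infinite (\<Union>(range Q))" using infD finite_subset by blast
  moreover have "finite (Q j)" for j unfolding Q_def by simp
  ultimately have "infinite (range Q)" by blast
  moreover have "range Q \<subseteq> {Q. is_Dn_quadruple 10 (4*a, 4*b) Q}" using valid by auto
  ultimately show ?thesis using finite_subset by blast
qed

theorem mainTheorem6:
  fixes m k :: int
  shows "(m mod 5 \<in> {2, 3} \<longrightarrow>
            infinite {Q. is_Dn_quadruple 10 (4 * (12 * m + 5), 4 * (6 * k + 3)) Q})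
       \<and> (m mod 5 \<in> {0, 4} \<longrightarrow>
            infinite {Q. is_Dn_quadruple 10 (4 * (12 * m + 11), 4 * (6 * k + 3)) Q})"
proof (intro conjI impI)
  assume "m mod 5 \<in> {2, 3}"
  then have "(12 * m + 5) mod 5 = 1 \<or> (12 * m + 5) mod 5 = 4" by auto presburger+
  moreover have "(12 * m + 5) mod 3 = 2" "(6 * k + 3) mod 3 = 0" by presburger+
  ultimately show "infinite {Q. is_Dn_quadruple 10 (4 * (12 * m + 5), 4 * (6 * k + 3)) Q}"
    by (intro key)
next
  assume "m mod 5 \<in> {0, 4}"
  then have "(12 * m + 11) mod 5 = 1 \<or> (12 * m + 11) mod 5 = 4" by auto presburger+
  moreover have "(12 * m + 11) mod 3 = 2" "(6 * k + 3) mod 3 = 0" by presburger+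
  ultimately show "infinite {Q. is_Dn_quadruple 10 (4 * (12 * m + 11), 4 * (6 * k + 3)) Q}"
    by (intro key)
qed

end
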